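(* Let $G=(V,E)$ be a graph on $n\geq 2d+1$ vertices with minimum degree $\delta(G)=d$. Suppose that $\deg(u)+\deg(v)\geq n+d-2$ for all pairs of distinct non-adjacent vertices $u,v$ of $G$. Then $G$ is rigid in $\mathbb{R}^d$.
   Context: A graph is rigid in $\mathbb{R}^d$ if some (equivalently every) generic $d$-dimensional bar-and-joint framework of it (vertex positions with coordinates algebraically independent over $\mathbb{Q}$) admits no continuous edge-length-preserving motion changing some pairwise distance between vertices. *)

theory Defs
  imports "HOL-Analysis.Analysis"
begin

definition simple_graph :: "'a set \<Rightarrow> 'a set set \<Rightarrow> bool" where
  "simple_graph V E \<longleftrightarrow> finite V \<and>
     (\<forall>e\<in>E. \<exists>u v. u \<in> V \<and> v \<in> V \<and> u \<noteq> v \<and> e = {u, v})"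

definition degree :: "'a set \<Rightarrow> 'a set set \<Rightarrow> 'a \<Rightarrow> nat" where
  "degree V E v = card {u \<in> V. {u, v} \<in> E}"

definition min_degree :: "'a set \<Rightarrow> 'a set set \<Rightarrow> nat" where
  "min_degree V E = Min (degree V E ` V)"

definition alg_indep_Q :: "'i set \<Rightarrow> ('i \<Rightarrow> real) \<Rightarrow> bool" where
  "alg_indep_Q I x \<longleftrightarrow>
     (\<forall>(M :: ('i \<Rightarrow> nat) set) (c :: ('i \<Rightarrow> nat) \<Rightarrow> rat).
        finite M \<and> M \<subseteq> {m. \<forall>i. i \<notin> I \<longrightarrow> m i = 0} \<and>
        (\<Sum>m\<in>M. real_of_rat (c m) * (\<Prod>i\<in>I. x i ^ m i)) = 0
        \<longrightarrow> (\<forall>m\<in>M. c m = 0))"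

text \<open>A d-dimensional framework: p v k is the k-th coordinate (k < d) of vertex v.\<close>
definition generic :: "'a set \<Rightarrow> nat \<Rightarrow> ('a \<Rightarrow> nat \<Rightarrow> real) \<Rightarrow> bool" where
  "generic V d p \<longleftrightarrow> alg_indep_Q (V \<times> {..<d}) (\<lambda>(v, k). p v k)"

definition sqdist :: "nat \<Rightarrow> ('a \<Rightarrow> nat \<Rightarrow> real) \<Rightarrow> 'a \<Rightarrow> 'a \<Rightarrow> real" where
  "sqdist d p u v = (\<Sum>k<d. (p u k - p v k)^2)"

definition flexible :: "'a set \<Rightarrow> 'a set set \<Rightarrow> nat \<Rightarrow> ('a \<Rightarrow> nat \<Rightarrow> real) \<Rightarrow> bool" where
  "flexible V E d p \<longleftrightarrow>
     (\<exists>x :: real \<Rightarrow> 'a \<Rightarrow> nat \<Rightarrow> real.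
        (\<forall>v\<in>V. \<forall>k<d. continuous_on {0..1} (\<lambda>t. x t v k)) \<and>
        (\<forall>v\<in>V. \<forall>k<d. x 0 v k = p v k) \<and>
        (\<forall>t\<in>{0..1}. \<forall>u v. {u, v} \<in> E \<longrightarrow> sqdist d (x t) u v = sqdist d p u v) \<and>
        (\<exists>t\<in>{0..1}. \<exists>u\<in>V. \<exists>v\<in>V. sqdist d (x t) u v \<noteq> sqdist d p u v))"

definition rigid :: "'a set \<Rightarrow> 'a set set \<Rightarrow> nat \<Rightarrow> bool" where
  "rigid V E d \<longleftrightarrow> (\<forall>p. generic V d p \<longrightarrow> \<not> flexible V E d p)"

end

theory Submission
  imports Defs "Jordan_Normal_Form.Determinant"
begin


definition polyfun :: "'i set \<Rightarrow> (('i \<Rightarrow> real) \<Rightarrow> real) \<Rightarrow> bool" where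
  "polyfun I f \<longleftrightarrow> (\<exists>M c. finite M \<and> M \<subseteq> {m. \<forall>i. i \<notin> I \<longrightarrow> m i = 0} \<and>
     (\<forall>z. f z = (\<Sum>m\<in>M. real_of_rat (c m) * (\<Prod>i\<in>I. z i ^ m i))))"

lemma pf_const: "polyfun I (\<lambda>z. real_of_rat q)"
  unfolding polyfun_def
  by (rule exI[of _ "{\<lambda>_. 0}"], rule exI[of _ "\<lambda>_. q"]) auto

lemma pf_var: assumes "j \<in> I" "finite I" shows "polyfun I (\<lambda>z. z j)"
  unfolding polyfun_def
proof (rule exI[of _ "{\<lambda>i. if i = j then 1 else 0}"], rule exI[of _ "\<lambda>_. 1"], intro conjI allI)
  fix z :: "'a \<Rightarrow> real"
  have "(\<Prod>i\<in>I. z i ^ (if i = j then 1 else 0)) = (\<Prod>i\<in>I. if i = j then z i else 1)"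
    by (rule prod.cong) auto
  also have "\<dots> = z j" using assms by (simp add: prod.delta')
  finally show "z j = (\<Sum>m\<in>{\<lambda>i. if i = j then 1 else 0}. real_of_rat 1 * (\<Prod>i\<in>I. z i ^ m i))"
    by simp
qed (use assms in auto)

lemma pf_add: assumes "polyfun I f" "polyfun I g" shows "polyfun I (\<lambda>z. f z + g z)"
proof -
  obtain M c where M: "finite M" "M \<subseteq> {m. \<forall>i. i \<notin> I \<longrightarrow> m i = 0}"
    "\<And>z. f z = (\<Sum>m\<in>M. real_of_rat (c m) * (\<Prod>i\<in>I. z i ^ m i))"
    using assms(1) unfolding polyfun_def by blast
  obtain M' c' where M': "finite M'" "M' \<subseteq> {m. \<forall>i. i \<notin> I \<longrightarrow> m i = 0}"
    "\<And>z. g z = (\<Sum>m\<in>M'. real_of_rat (c' m) * (\<Prod>i\<in>I. z i ^ m i))"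
    using assms(2) unfolding polyfun_def by blast
  let ?c = "\<lambda>m. (if m \<in> M then c m else 0) + (if m \<in> M' then c' m else 0)"
  show ?thesis unfolding polyfun_def
  proof (rule exI[of _ "M \<union> M'"], rule exI[of _ ?c], intro conjI allI)
    fix z :: "'a \<Rightarrow> real"
    let ?X = "\<lambda>m. (\<Prod>i\<in>I. z i ^ m i)"
    have "(\<Sum>m\<in>M \<union> M'. real_of_rat (?c m) * ?X m) =
       (\<Sum>m\<in>M \<union> M'. (if m \<in> M then real_of_rat (c m) * ?X m else 0)) +
       (\<Sum>m\<in>M \<union> M'. (if m \<in> M' then real_of_rat (c' m) * ?X m else 0))"
      unfolding sum.distrib[symmetric] by (rule sum.cong) (auto simp: of_rat_add distrib_right)
    also have "\<dots> = (\<Sum>m\<in>M. real_of_rat (c m) * ?X m) + (\<Sum>m\<in>M'. real_of_rat (c' m) * ?X m)"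
      using M(1) M'(1) by (simp add: sum.If_cases Int_absorb1 Int_absorb2)
    finally show "f z + g z = (\<Sum>m\<in>M \<union> M'. real_of_rat (?c m) * ?X m)"
      using M(3) M'(3) by simp
  qed (use M M' in auto)
qed

lemma pf_mult: assumes "polyfun I f" "polyfun I g" shows "polyfun I (\<lambda>z. f z * g z)"
proof -
  obtain M c where M: "finite M" "M \<subseteq> {m. \<forall>i. i \<notin> I \<longrightarrow> m i = 0}"
    "\<And>z. f z = (\<Sum>m\<in>M. real_of_rat (c m) * (\<Prod>i\<in>I. z i ^ m i))"
    using assms(1) unfolding polyfun_def by blast
  obtain M' c' where M': "finite M'" "M' \<subseteq> {m. \<forall>i. i \<notin> I \<longrightarrow> m i = 0}"
    "\<And>z. g z = (\<Sum>m\<in>M'. real_of_rat (c' m) * (\<Prod>i\<in>I. z i ^ m i))"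
    using assms(2) unfolding polyfun_def by blast
  define h where "h = (\<lambda>(m::'a\<Rightarrow>nat, m'::'a\<Rightarrow>nat). (\<lambda>i. m i + m' i))"
  define S where "S = M \<times> M'"
  let ?c = "\<lambda>k. (\<Sum>q\<in>{q \<in> S. h q = k}. c (fst q) * c' (snd q))"
  have finS: "finite S" using M(1) M'(1) S_def by simp
  show ?thesis unfolding polyfun_def
  proof (rule exI[of _ "h ` S"], rule exI[of _ ?c], intro conjI allI)
    fix z :: "'a \<Rightarrow> real"
    let ?X = "\<lambda>m. (\<Prod>i\<in>I. z i ^ m i)"
    have "f z * g z = (\<Sum>m\<in>M. \<Sum>m'\<in>M'. real_of_rat (c m) * real_of_rat (c' m') * (?X m * ?X m'))"
      unfolding M(3) M'(3) sum_product by (simp add: algebra_simps)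
    also have "\<dots> = (\<Sum>q\<in>S. real_of_rat (c (fst q) * c' (snd q)) * ?X (h q))"
      unfolding S_def sum.cartesian_product
      by (rule sum.cong) (auto simp: h_def of_rat_mult power_add prod.distrib split: prod.splits)
    also have "\<dots> = (\<Sum>k\<in>h ` S. \<Sum>q\<in>{q \<in> S. h q = k}. real_of_rat (c (fst q) * c' (snd q)) * ?X (h q))"
      by (rule sum.image_gen[OF finS])
    also have "\<dots> = (\<Sum>k\<in>h ` S. real_of_rat (?c k) * ?X k)"
      by (rule sum.cong) (auto simp: of_rat_sum sum_distrib_right)
    finally show "f z * g z = (\<Sum>k\<in>h ` S. real_of_rat (?c k) * ?X k)" .
  next
    show "finite (h ` S)" using finS by simp
  next
    show "h ` S \<subseteq> {m. \<forall>i. i \<notin> I \<longrightarrow> m i = 0}"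
    proof
      fix k assume "k \<in> h ` S"
      then obtain m m' where "m \<in> M" "m' \<in> M'" "k = (\<lambda>i. m i + m' i)"
        unfolding S_def h_def by auto
      then show "k \<in> {m. \<forall>i. i \<notin> I \<longrightarrow> m i = 0}" using M(2) M'(2) by auto
    qed
  qed
qed

lemma pf_minus: assumes "polyfun I f" "polyfun I g" shows "polyfun I (\<lambda>z. f z - g z)"
proof -
  have "polyfun I (\<lambda>z. f z + real_of_rat (-1) * g z)"
    by (intro pf_add pf_mult pf_const assms)
  then show ?thesis by simp
qed

lemma pf_sum: assumes "finite S" "\<And>s. s \<in> S \<Longrightarrow> polyfun I (f s)"
  shows "polyfun I (\<lambda>z. \<Sum>s\<in>S. f s z)"
  using assms
proof (induction S rule: finite_induct)
  case empty
  then show ?case using pf_const[of I 0] by simp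
next
  case (insert x F)
  then show ?case by (simp add: pf_add)
qed

lemma pf_prod: assumes "finite S" "\<And>s. s \<in> S \<Longrightarrow> polyfun I (f s)"
  shows "polyfun I (\<lambda>z. \<Prod>s\<in>S. f s z)"
  using assms
proof (induction S rule: finite_induct)
  case empty
  then show ?case using pf_const[of I 1] by simp
next
  case (insert x F)
  then show ?case by (simp add: pf_mult)
qed

lemma pf_det: assumes "\<And>i j. i < n \<Longrightarrow> j < n \<Longrightarrow> polyfun I (e i j)"
  shows "polyfun I (\<lambda>z. Determinant.det (mat n n (\<lambda>(i,j). e i j z)))"
proof -
  have "polyfun I (\<lambda>z. \<Sum>p\<in>{p. p permutes {0..<n}}. of_int (sign p) * (\<Prod>i = 0..<n. e i (p i) z))"
  proof (rule pf_sum)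
    show "finite {p. p permutes {0..<n}}" by (simp add: finite_permutations)
  next
    fix p assume p: "p \<in> {p. p permutes {0..<n}}"
    have c: "polyfun I (\<lambda>z. real_of_rat (of_int (sign p)))" by (rule pf_const)
    have "polyfun I (\<lambda>z. \<Prod>i = 0..<n. e i (p i) z)"
    proof (rule pf_prod)
      fix i assume "i \<in> {0..<n}"
      then have "i < n" "p i < n" using p permutes_in_image[of p "{0..<n}" i] by auto
      then show "polyfun I (e i (p i))" using assms by simp
    qed simp
    from pf_mult[OF c this] show "polyfun I (\<lambda>z. of_int (sign p) * (\<Prod>i = 0..<n. e i (p i) z))"
      by simp
  qed
  then show ?thesis by (simp add: det_def)
qed

lemma pf_generic_zero:
  assumes "alg_indep_Q I x" "polyfun I f" "f x = 0"
  shows "f z = 0"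
proof -
  obtain M c where M: "finite M" "M \<subseteq> {m. \<forall>i. i \<notin> I \<longrightarrow> m i = 0}"
    "\<And>z. f z = (\<Sum>m\<in>M. real_of_rat (c m) * (\<Prod>i\<in>I. z i ^ m i))"
    using assms(2) unfolding polyfun_def by blast
  have "(\<Sum>m\<in>M. real_of_rat (c m) * (\<Prod>i\<in>I. x i ^ m i)) = 0" using M(3) assms(3) by simp
  then have "\<forall>m\<in>M. c m = 0" using assms(1) M(1,2) unfolding alg_indep_Q_def by (elim allE[of _ M] allE[of _ c]) simp
  then show ?thesis using M(3) by simp
qed



definition dotp :: "nat \<Rightarrow> (nat \<Rightarrow> real) \<Rightarrow> (nat \<Rightarrow> real) \<Rightarrow> real" where
  "dotp d f g = (\<Sum>k<d. f k * g k)"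

lemma dotp_comm: "dotp d f g = dotp d g f"
  unfolding dotp_def by (simp add: mult.commute)

lemma mv_comp: assumes "A \<in> carrier_mat n n" "v \<in> carrier_vec n" "i < n"
  shows "(A *\<^sub>v v) $ i = (\<Sum>j<n. A $$ (i,j) * v $ j)"
  using assms by (simp add: scalar_prod_def atLeast0LessThan)

lemma dotp_lincomb:
  "dotp d (\<lambda>k. (\<Sum>i<n. c i * v i k) + a * Y k + b * C k) f =
   (\<Sum>i<n. c i * dotp d (v i) f) + a * dotp d Y f + b * dotp d C f"
proof -
  have "dotp d (\<lambda>k. (\<Sum>i<n. c i * v i k) + a * Y k + b * C k) f =
     (\<Sum>k<d. \<Sum>i<n. c i * (v i k * f k)) + a * dotp d Y f + b * dotp d C f"
    unfolding dotp_def by (simp add: algebra_simps sum.distrib sum_distrib_left sum_distrib_right)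
  also have "(\<Sum>k<d. \<Sum>i<n. c i * (v i k * f k)) = (\<Sum>i<n. c i * dotp d (v i) f)"
    unfolding dotp_def by (subst sum.swap) (simp add: sum_distrib_left)
  finally show ?thesis .
qed

lemma dependent_rows:
  fixes R :: "nat \<Rightarrow> nat \<Rightarrow> real"
  shows "\<exists>w. w \<in> carrier_vec (Suc (Suc n)) \<and> w \<noteq> 0\<^sub>v (Suc (Suc n)) \<and>
     (\<forall>k < Suc n. (\<Sum>i<Suc (Suc n). R i k * w $ i) = 0)"
proof -
  define At where "At = mat (Suc (Suc n)) (Suc (Suc n)) (\<lambda>(k,i). if k < Suc n then R i k else (0::real))"
  have At: "At \<in> carrier_mat (Suc (Suc n)) (Suc (Suc n))" unfolding At_def by simp
  have "Determinant.det At = 0"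
  proof -
    have "\<And>p. p permutes {0..<Suc (Suc n)} \<Longrightarrow> (\<Prod>i = 0..<Suc (Suc n). At $$ (i, p i)) = 0"
    proof -
      fix p assume p: "p permutes {0..<Suc (Suc n)}"
      have "p (Suc n) < Suc (Suc n)" using p permutes_in_image[of p _ "Suc n"] by auto
      then have "At $$ (Suc n, p (Suc n)) = 0" unfolding At_def by simp
      then show "(\<Prod>i = 0..<Suc (Suc n). At $$ (i, p i)) = 0"
        by (intro prod_zero) auto
    qed
    then have "(\<Sum>p\<in>{p. p permutes {0..<Suc (Suc n)}}. of_int (sign p) * (\<Prod>i = 0..<Suc (Suc n). At $$ (i, p i))) = (0::real)"
      by (intro sum.neutral) auto
    then show ?thesis using At unfolding det_def by simp
  qed
  then obtain w where w: "w \<in> carrier_vec (Suc (Suc n))" "w \<noteq> 0\<^sub>v (Suc (Suc n))" "At *\<^sub>v w = 0\<^sub>v (Suc (Suc n))"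
    using det_0_iff_vec_prod_zero[OF At] by blast
  have "\<forall>k < Suc n. (\<Sum>i<Suc (Suc n). R i k * w $ i) = 0"
  proof (intro allI impI)
    fix k assume k: "k < Suc n"
    have "(At *\<^sub>v w) $ k = 0" using w(3) k by simp
    then show "(\<Sum>i<Suc (Suc n). R i k * w $ i) = 0"
      using mv_comp[OF At w(1), of k] k unfolding At_def by simp
  qed
  with w show ?thesis by blast
qed

lemma core:
  fixes u :: "nat \<Rightarrow> nat \<Rightarrow> real" and X Z :: "nat \<Rightarrow> real"
  assumes detG: "Determinant.det (mat n n (\<lambda>(i,j). dotp (Suc n) (u i) (u j))) \<noteq> 0"
  shows "\<exists>m a e. \<forall>v Y C.
     (\<forall>i<n. \<forall>j<n. dotp (Suc n) (v i) (v j) = dotp (Suc n) (u i) (u j)) \<and>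
     (\<forall>i<n. dotp (Suc n) (v i) Y = dotp (Suc n) (u i) X \<and> dotp (Suc n) (v i) C = dotp (Suc n) (u i) Z) \<and>
     dotp (Suc n) Y Y = dotp (Suc n) X X \<and> dotp (Suc n) C C = dotp (Suc n) Z Z
     \<longrightarrow> (dotp (Suc n) Y C - m)^2 = a * e"
proof -
  let ?d = "Suc n"
  define G where "G = mat n n (\<lambda>(i,j). dotp ?d (u i) (u j))"
  have G: "G \<in> carrier_mat n n" unfolding G_def by simp
  have Gij: "\<And>i j. i < n \<Longrightarrow> j < n \<Longrightarrow> G $$ (i,j) = dotp ?d (u i) (u j)" unfolding G_def by simp
  have Gsym: "\<And>i j. i < n \<Longrightarrow> j < n \<Longrightarrow> G $$ (i,j) = G $$ (j,i)" using Gij dotp_comm by metis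
  have "G \<in> Units (ring_mat TYPE(real) n ())"
    by (rule det_non_zero_imp_unit[OF G]) (use detG in \<open>simp add: G_def\<close>)
  then obtain Gi where Gi: "Gi \<in> carrier_mat n n" "Gi * G = 1\<^sub>m n" "G * Gi = 1\<^sub>m n"
    unfolding Units_def ring_mat_simps by auto
  define bX where "bX = vec n (\<lambda>j. dotp ?d (u j) X)"
  define bZ where "bZ = vec n (\<lambda>j. dotp ?d (u j) Z)"
  define al where "al = Gi *\<^sub>v bX"
  define be where "be = Gi *\<^sub>v bZ"
  have bXc: "bX \<in> carrier_vec n" and bZc: "bZ \<in> carrier_vec n" unfolding bX_def bZ_def by auto
  have alc: "al \<in> carrier_vec n" and bec: "be \<in> carrier_vec n" unfolding al_def be_def using Gi(1) bXc bZc by auto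
  have "G *\<^sub>v al = bX" unfolding al_def using Gi G bXc
    by (metis assoc_mult_mat_vec one_mult_mat_vec)
  then have Gal: "\<And>i. i < n \<Longrightarrow> (\<Sum>j<n. G $$ (i,j) * al $ j) = dotp ?d (u i) X"
    using mv_comp[OF G alc] unfolding bX_def by (metis index_vec)
  have "G *\<^sub>v be = bZ" unfolding be_def using Gi G bZc
    by (metis assoc_mult_mat_vec one_mult_mat_vec)
  then have Gbe: "\<And>i. i < n \<Longrightarrow> (\<Sum>j<n. G $$ (i,j) * be $ j) = dotp ?d (u i) Z"
    using mv_comp[OF G bec] unfolding bZ_def by (metis index_vec)
  have inj: "\<And>dl. dl \<in> carrier_vec n \<Longrightarrow> (\<forall>i<n. (\<Sum>j<n. G $$ (i,j) * dl $ j) = 0) \<Longrightarrow> \<forall>i<n. dl $ i = 0"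
  proof -
    fix dl :: "real vec" assume dl: "dl \<in> carrier_vec n" and h: "\<forall>i<n. (\<Sum>j<n. G $$ (i,j) * dl $ j) = 0"
    have "G *\<^sub>v dl = 0\<^sub>v n" using h mv_comp[OF G dl] G by (intro eq_vecI) auto
    then have "dl = Gi *\<^sub>v 0\<^sub>v n" using Gi G dl by (metis assoc_mult_mat_vec one_mult_mat_vec)
    then have "dl = 0\<^sub>v n" using Gi(1) by auto
    then show "\<forall>i<n. dl $ i = 0" by auto
  qed
  define m where "m = (\<Sum>i<n. be $ i * dotp ?d (u i) X)"
  define a where "a = dotp ?d X X - (\<Sum>i<n. al $ i * dotp ?d (u i) X)"
  define e where "e = dotp ?d Z Z - (\<Sum>i<n. be $ i * dotp ?d (u i) Z)"
  have msym: "(\<Sum>i<n. al $ i * dotp ?d (u i) Z) = m"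
  proof -
    have "(\<Sum>i<n. al $ i * dotp ?d (u i) Z) = (\<Sum>i<n. \<Sum>j<n. al $ i * (G $$ (i,j) * be $ j))"
      by (intro sum.cong refl) (simp add: Gbe[symmetric] sum_distrib_left)
    also have "\<dots> = (\<Sum>j<n. \<Sum>i<n. be $ j * (G $$ (j,i) * al $ i))"
      by (subst sum.swap) (intro sum.cong refl, simp add: Gsym)
    also have "\<dots> = m" unfolding m_def using Gal by (simp add: sum_distrib_left[symmetric])
    finally show ?thesis .
  qed
  show ?thesis
  proof (intro exI allI impI)
    fix v :: "nat \<Rightarrow> nat \<Rightarrow> real" and Y C :: "nat \<Rightarrow> real"
    assume H: "(\<forall>i<n. \<forall>j<n. dotp ?d (v i) (v j) = dotp ?d (u i) (u j)) \<and>
     (\<forall>i<n. dotp ?d (v i) Y = dotp ?d (u i) X \<and> dotp ?d (v i) C = dotp ?d (u i) Z) \<and>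
     dotp ?d Y Y = dotp ?d X X \<and> dotp ?d C C = dotp ?d Z Z"
    define s where "s = dotp ?d Y C"
    define R where "R = (\<lambda>i. if i < n then v i else if i = n then Y else C)"
    obtain w where w: "w \<in> carrier_vec (Suc (Suc n))" "w \<noteq> 0\<^sub>v (Suc (Suc n))"
       "\<forall>k < Suc n. (\<Sum>i<Suc (Suc n). R i k * w $ i) = 0"
      using dependent_rows by blast
    define lam where "lam = w $ n"
    define mu where "mu = w $ Suc n"
    define L where "L = (\<lambda>k. (\<Sum>i<n. w $ i * v i k) + lam * Y k + mu * C k)"
    have L0: "\<And>k. k < ?d \<Longrightarrow> L k = 0"
    proof -
      fix k assume "k < ?d"
      then have "(\<Sum>i<Suc (Suc n). R i k * w $ i) = 0" using w(3) by blast
      moreover have "(\<Sum>i<Suc (Suc n). R i k * w $ i) = L k"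
        unfolding L_def lam_def mu_def R_def by (simp add: mult.commute)
      ultimately show "L k = 0" by simp
    qed
    have Lf: "\<And>f. dotp ?d L f = 0" unfolding dotp_def using L0 by simp
    have Lf2: "\<And>f. dotp ?d L f = (\<Sum>i<n. w $ i * dotp ?d (v i) f) + lam * dotp ?d Y f + mu * dotp ?d C f"
      unfolding L_def by (rule dotp_lincomb)
    define dl where "dl = vec n (\<lambda>i. w $ i + lam * al $ i + mu * be $ i)"
    have "\<forall>i<n. dl $ i = 0"
    proof (rule inj)
      show "dl \<in> carrier_vec n" unfolding dl_def by simp
      show "\<forall>i<n. (\<Sum>j<n. G $$ (i,j) * dl $ j) = 0"
      proof (intro allI impI)
        fix i assume i: "i < n"
        have "(\<Sum>j<n. G $$ (i,j) * dl $ j) =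
          (\<Sum>j<n. w $ j * dotp ?d (v j) (v i)) + lam * (\<Sum>j<n. G $$ (i,j) * al $ j) + mu * (\<Sum>j<n. G $$ (i,j) * be $ j)"
          unfolding dl_def using H i Gij Gsym
          by (simp add: algebra_simps sum.distrib sum_distrib_left dotp_comm)
        also have "\<dots> = (\<Sum>j<n. w $ j * dotp ?d (v j) (v i)) + lam * dotp ?d Y (v i) + mu * dotp ?d C (v i)"
          using Gal Gbe i H by (simp add: dotp_comm)
        also have "\<dots> = 0" using Lf Lf2 by metis
        finally show "(\<Sum>j<n. G $$ (i,j) * dl $ j) = 0" .
      qed
    qed
    then have wi: "\<And>i. i < n \<Longrightarrow> w $ i = - (lam * al $ i + mu * be $ i)"
    proof -
      fix i assume i: "i < n"
      with \<open>\<forall>i<n. dl $ i = 0\<close> have "w $ i + lam * al $ i + mu * be $ i = 0" unfolding dl_def by simp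
      then show "w $ i = - (lam * al $ i + mu * be $ i)" by linarith
    qed
    have bXbe: "(\<Sum>i<n. be $ i * dotp ?d (u i) X) = m" by (simp add: m_def)
    have EY: "lam * a + mu * (s - m) = 0"
    proof -
      have "0 = (\<Sum>i<n. w $ i * dotp ?d (v i) Y) + lam * dotp ?d Y Y + mu * dotp ?d C Y"
        using Lf Lf2 by metis
      also have "(\<Sum>i<n. w $ i * dotp ?d (v i) Y) = (\<Sum>i<n. - (lam * (al $ i * dotp ?d (u i) X) + mu * (be $ i * dotp ?d (u i) X)))"
      proof (intro sum.cong refl)
        fix i assume "i \<in> {..<n}"
        then have i: "i < n" by simp
        have "dotp ?d (v i) Y = dotp ?d (u i) X" using H i by blast
        then show "w $ i * dotp ?d (v i) Y = - (lam * (al $ i * dotp ?d (u i) X) + mu * (be $ i * dotp ?d (u i) X))"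
          by (simp only: wi[OF i]) (simp add: algebra_simps)
      qed
      also have "\<dots> = - (lam * (\<Sum>i<n. al $ i * dotp ?d (u i) X) + mu * m)"
        unfolding m_def by (simp add: sum.distrib sum_distrib_left sum_negf sum_subtractf)
      finally show ?thesis unfolding a_def s_def using H by (simp add: dotp_comm algebra_simps)
    qed
    have EC: "lam * (s - m) + mu * e = 0"
    proof -
      have "0 = (\<Sum>i<n. w $ i * dotp ?d (v i) C) + lam * dotp ?d Y C + mu * dotp ?d C C"
        using Lf Lf2 by metis
      also have "(\<Sum>i<n. w $ i * dotp ?d (v i) C) = (\<Sum>i<n. - (lam * (al $ i * dotp ?d (u i) Z) + mu * (be $ i * dotp ?d (u i) Z)))"
      proof (intro sum.cong refl)
        fix i assume "i \<in> {..<n}"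
        then have i: "i < n" by simp
        have "dotp ?d (v i) C = dotp ?d (u i) Z" using H i by blast
        then show "w $ i * dotp ?d (v i) C = - (lam * (al $ i * dotp ?d (u i) Z) + mu * (be $ i * dotp ?d (u i) Z))"
          by (simp only: wi[OF i]) (simp add: algebra_simps)
      qed
      also have "\<dots> = - (lam * m + mu * (\<Sum>i<n. be $ i * dotp ?d (u i) Z))"
        using msym by (simp add: sum.distrib sum_distrib_left[symmetric] sum_negf sum_subtractf)
      finally show ?thesis unfolding e_def s_def using H by (simp add: algebra_simps)
    qed
    have nz: "lam \<noteq> 0 \<or> mu \<noteq> 0"
    proof (rule ccontr)
      assume "\<not> (lam \<noteq> 0 \<or> mu \<noteq> 0)"
      then have "lam = 0" "mu = 0" by auto
      then have "\<forall>i<Suc (Suc n). w $ i = 0" using wi unfolding lam_def mu_def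
        by (auto simp: less_Suc_eq)
      then have "w = 0\<^sub>v (Suc (Suc n))" using w(1) by (intro eq_vecI) auto
      with w(2) show False by simp
    qed
    show "(dotp ?d Y C - m)^2 = a * e"
    proof (cases "lam = 0")
      case True
      then have "mu \<noteq> 0" using nz by simp
      then have "s - m = 0" "e = 0" using EY EC True by auto
      then show ?thesis unfolding s_def by simp
    next
      case False
      have "a = - mu * (s - m) / lam" using EY False by (simp add: field_simps)
      then have "a * e = - (s - m) * (mu * e) / lam" by (simp add: algebra_simps)
      also have "mu * e = - lam * (s - m)" using EC by (simp add: algebra_simps)
      also have "- (s - m) * (- lam * (s - m)) / lam = (s - m)^2" using False by (simp add: field_simps power2_eq_square)
      finally show ?thesis unfolding s_def by simp
    qed
  qed
qed


lemma sqdist_self: "sqdist d q a a = 0" unfolding sqdist_def by simp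
lemma sqdist_comm: "sqdist d q a b = sqdist d q b a"
  unfolding sqdist_def by (simp add: power2_commute)

lemma polar: "dotp d (\<lambda>k. q a k - q c k) (\<lambda>k. q b k - q c k) =
   (sqdist d q a c + sqdist d q b c - sqdist d q a b) / 2"
  unfolding dotp_def sqdist_def
  by (simp add: sum_divide_distrib[symmetric] sum.distrib[symmetric] sum_subtractf[symmetric] sum_distrib_right)
     (intro sum.cong refl, simp add: power2_eq_square algebra_simps)

lemma sqdist_dotp: "sqdist d q a c = dotp d (\<lambda>k. q a k - q c k) (\<lambda>k. q a k - q c k)"
  unfolding dotp_def sqdist_def by (simp add: power2_eq_square)

lemma gen_det:
  assumes gen: "generic V d p" and finV: "finite V" and d: "d = Suc n"
    and ks: "distinct ks" "length ks = d" "set ks \<subseteq> V"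
  shows "Determinant.det (mat n n (\<lambda>(i,j). dotp d (\<lambda>k. p (ks ! Suc i) k - p (ks ! 0) k)
             (\<lambda>k. p (ks ! Suc j) k - p (ks ! 0) k))) \<noteq> 0"
proof
  let ?I = "V \<times> {..<d}"
  define F where "F = (\<lambda>z::('a \<times> nat) \<Rightarrow> real. Determinant.det (mat n n (\<lambda>(i,j).
      dotp d (\<lambda>k. z (ks ! Suc i, k) - z (ks ! 0, k)) (\<lambda>k. z (ks ! Suc j, k) - z (ks ! 0, k)))))"
  have finI: "finite ?I" using finV by simp
  have inV: "\<And>i. i < d \<Longrightarrow> ks ! i \<in> V" using ks by auto
  have pf: "polyfun ?I F" unfolding F_def
  proof (rule pf_det)
    fix i j assume ij: "i < n" "j < n"
    show "polyfun ?I (\<lambda>z. dotp d (\<lambda>k. z (ks ! Suc i, k) - z (ks ! 0, k)) (\<lambda>k. z (ks ! Suc j, k) - z (ks ! 0, k)))"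
      unfolding dotp_def
    proof (rule pf_sum, simp)
      fix k assume "k \<in> {..<d}"
      then have k: "k < d" by simp
      have v: "\<And>l. l < d \<Longrightarrow> polyfun ?I (\<lambda>z. z (ks ! l, k))"
        using inV k finI by (intro pf_var) auto
      show "polyfun ?I (\<lambda>z. (z (ks ! Suc i, k) - z (ks ! 0, k)) * (z (ks ! Suc j, k) - z (ks ! 0, k)))"
        using ij d by (intro pf_mult pf_minus v) auto
    qed
  qed
  assume "Determinant.det (mat n n (\<lambda>(i,j). dotp d (\<lambda>k. p (ks ! Suc i) k - p (ks ! 0) k)
             (\<lambda>k. p (ks ! Suc j) k - p (ks ! 0) k))) = 0"
  then have "F (\<lambda>(v,k). p v k) = 0" unfolding F_def by simp
  then have F0: "\<And>z. F z = 0"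
    using pf_generic_zero[OF _ pf] gen unfolding generic_def by blast
  define z0 where "z0 = (\<lambda>(v::'a, k::nat). if k < n \<and> v = ks ! Suc k then (1::real) else 0)"
  have z00: "\<And>k. z0 (ks ! 0, k) = 0"
  proof -
    fix k
    have "k < n \<Longrightarrow> ks ! 0 \<noteq> ks ! Suc k" using ks d nth_eq_iff_index_eq by fastforce
    then show "z0 (ks ! 0, k) = 0" unfolding z0_def by auto
  qed
  have z0i: "\<And>i k. i < n \<Longrightarrow> k < d \<Longrightarrow> z0 (ks ! Suc i, k) = (if k = i then 1 else 0)"
  proof -
    fix i k assume ik: "i < n" "k < d"
    have "k < n \<Longrightarrow> (ks ! Suc i = ks ! Suc k) = (i = k)" using ks d ik nth_eq_iff_index_eq by fastforce
    then show "z0 (ks ! Suc i, k) = (if k = i then 1 else 0)" unfolding z0_def using ik by auto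
  qed
  have "mat n n (\<lambda>(i,j). dotp d (\<lambda>k. z0 (ks ! Suc i, k) - z0 (ks ! 0, k)) (\<lambda>k. z0 (ks ! Suc j, k) - z0 (ks ! 0, k)))
        = 1\<^sub>m n"
  proof (rule eq_matI)
    fix i j assume ij: "i < dim_row (1\<^sub>m n :: real mat)" "j < dim_col (1\<^sub>m n :: real mat)"
    then have ij': "i < n" "j < n" by auto
    have "dotp d (\<lambda>k. z0 (ks ! Suc i, k) - z0 (ks ! 0, k)) (\<lambda>k. z0 (ks ! Suc j, k) - z0 (ks ! 0, k))
       = (\<Sum>k<d. (if k = i then 1 else 0) * (if k = j then 1 else 0))"
      unfolding dotp_def using z00 z0i ij' by (intro sum.cong refl) auto
    also have "\<dots> = (if i = j then 1 else 0)" using ij' d by (simp add: if_distrib[of "\<lambda>x. x * _"] cong: if_cong)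
    finally show "mat n n (\<lambda>(i,j). dotp d (\<lambda>k. z0 (ks ! Suc i, k) - z0 (ks ! 0, k)) (\<lambda>k. z0 (ks ! Suc j, k) - z0 (ks ! 0, k))) $$ (i, j) = 1\<^sub>m n $$ (i, j)"
      using ij' by simp
  qed auto
  then have "F z0 = 1" unfolding F_def by simp
  with F0 show False by simp
qed

lemma two_vals:
  fixes s m P :: real assumes "(s - m)^2 = P" shows "s = m + sqrt P \<or> s = m - sqrt P"
proof -
  have "sqrt P = \<bar>s - m\<bar>" using assms by (metis real_sqrt_abs)
  then show ?thesis by (cases "s - m \<ge> 0") auto
qed

lemma GL:
  fixes x :: "real \<Rightarrow> 'a \<Rightarrow> nat \<Rightarrow> real"
  assumes gen: "generic V d p" and finV: "finite V" and d: "d = Suc n"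
    and ks: "distinct ks" "length ks = d" "set ks \<subseteq> V" and ab: "a \<in> V" "b \<in> V"
    and cont: "\<forall>v\<in>V. \<forall>k<d. continuous_on {0..1} (\<lambda>t. x t v k)"
    and x0: "\<forall>v\<in>V. \<forall>k<d. x 0 v k = p v k"
    and presa: "\<And>t i j. t \<in> {0..1} \<Longrightarrow> i \<in> insert a (set ks) \<Longrightarrow> j \<in> insert a (set ks) \<Longrightarrow>
        sqdist d (x t) i j = sqdist d p i j"
    and presb: "\<And>t i j. t \<in> {0..1} \<Longrightarrow> i \<in> insert b (set ks) \<Longrightarrow> j \<in> insert b (set ks) \<Longrightarrow>
        sqdist d (x t) i j = sqdist d p i j"
    and t: "t \<in> {0..1}"
  shows "sqdist d (x t) a b = sqdist d p a b"
proof -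
  define k0 where "k0 = ks ! 0"
  define u where "u = (\<lambda>i k. p (ks ! Suc i) k - p k0 k)"
  define X where "X = (\<lambda>k. p a k - p k0 k)"
  define Z where "Z = (\<lambda>k. p b k - p k0 k)"
  have detG: "Determinant.det (mat n n (\<lambda>(i,j). dotp (Suc n) (u i) (u j))) \<noteq> 0"
    using gen_det[OF gen finV d ks] d unfolding u_def k0_def by simp
  obtain m ga ge where me: "\<forall>v Y C.
     (\<forall>i<n. \<forall>j<n. dotp (Suc n) (v i) (v j) = dotp (Suc n) (u i) (u j)) \<and>
     (\<forall>i<n. dotp (Suc n) (v i) Y = dotp (Suc n) (u i) X \<and> dotp (Suc n) (v i) C = dotp (Suc n) (u i) Z) \<and>
     dotp (Suc n) Y Y = dotp (Suc n) X X \<and> dotp (Suc n) C C = dotp (Suc n) Z Z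
     \<longrightarrow> (dotp (Suc n) Y C - m)^2 = ga * ge"
    using core[OF detG] by blast
  have k0in: "k0 \<in> set ks" unfolding k0_def using ks d by simp
  have ksin: "\<And>i. i < n \<Longrightarrow> ks ! Suc i \<in> set ks" using ks d by simp
  define A0 where "A0 = sqdist d p a k0 + sqdist d p b k0"
  define f where "f = (\<lambda>t. sqdist d (x t) a b)"
  have key: "f t \<in> {A0 - 2*(m + sqrt (ga*ge)), A0 - 2*(m - sqrt (ga*ge))}" if t: "t \<in> {0..1}" for t
  proof -
    define v where "v = (\<lambda>i k. x t (ks ! Suc i) k - x t k0 k)"
    define Y where "Y = (\<lambda>k. x t a k - x t k0 k)"
    define C where "C = (\<lambda>k. x t b k - x t k0 k)"
    have h1: "\<forall>i<n. \<forall>j<n. dotp (Suc n) (v i) (v j) = dotp (Suc n) (u i) (u j)"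
    proof (intro allI impI)
      fix i j assume ij: "i < n" "j < n"
      show "dotp (Suc n) (v i) (v j) = dotp (Suc n) (u i) (u j)"
        unfolding v_def u_def d[symmetric]
        unfolding polar[of d "x t" "ks ! Suc i" k0 "ks ! Suc j"] polar[of d p "ks ! Suc i" k0 "ks ! Suc j"]
        using presa[OF t] ksin ij k0in by simp
    qed
    have h2: "\<forall>i<n. dotp (Suc n) (v i) Y = dotp (Suc n) (u i) X \<and> dotp (Suc n) (v i) C = dotp (Suc n) (u i) Z"
    proof (intro allI impI conjI)
      fix i assume i: "i < n"
      show "dotp (Suc n) (v i) Y = dotp (Suc n) (u i) X"
        unfolding v_def u_def Y_def X_def d[symmetric]
        unfolding polar[of d "x t" "ks ! Suc i" k0 a] polar[of d p "ks ! Suc i" k0 a]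
        using presa[OF t] ksin i k0in by simp
      show "dotp (Suc n) (v i) C = dotp (Suc n) (u i) Z"
        unfolding v_def u_def C_def Z_def d[symmetric]
        unfolding polar[of d "x t" "ks ! Suc i" k0 b] polar[of d p "ks ! Suc i" k0 b]
        using presb[OF t] ksin i k0in by simp
    qed
    have h3: "dotp (Suc n) Y Y = dotp (Suc n) X X"
      unfolding Y_def X_def d[symmetric] sqdist_dotp[symmetric] using presa[OF t] k0in by simp
    have h4: "dotp (Suc n) C C = dotp (Suc n) Z Z"
      unfolding C_def Z_def d[symmetric] sqdist_dotp[symmetric] using presb[OF t] k0in by simp
    have sq: "(dotp (Suc n) Y C - m)^2 = ga * ge" using me h1 h2 h3 h4 by blast
    have fe: "f t = A0 - 2 * dotp (Suc n) Y C"
    proof -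
      have "dotp (Suc n) Y C = (sqdist d (x t) a k0 + sqdist d (x t) b k0 - sqdist d (x t) a b) / 2"
        unfolding Y_def C_def d[symmetric] by (rule polar)
      moreover have "sqdist d (x t) a k0 = sqdist d p a k0" using presa[OF t] k0in by simp
      moreover have "sqdist d (x t) b k0 = sqdist d p b k0" using presb[OF t] k0in by simp
      ultimately show ?thesis unfolding f_def A0_def by simp
    qed
    from two_vals[OF sq] fe show ?thesis by auto
  qed
  have cf: "continuous_on {0..1} f"
    unfolding f_def sqdist_def
    using ab cont by (intro continuous_intros) auto
  have "f constant_on {0..1}"
  proof (rule continuous_finite_range_constant[OF connected_Icc cf])
    show "finite (f ` {0..1})"
      by (rule finite_subset[of _ "{A0 - 2*(m + sqrt (ga*ge)), A0 - 2*(m - sqrt (ga*ge))}"]) (use key in blast, simp)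
  qed
  then have "f t = f 0" using t unfolding constant_on_def by auto
  also have "f 0 = sqdist d p a b" unfolding f_def sqdist_def using x0 ab by simp
  finally show ?thesis unfolding f_def .
qed

theorem lemma4p2:
  fixes V :: "'a set" and E :: "'a set set" and d :: nat
  assumes "simple_graph V E"
    and "card V \<ge> 2 * d + 1"
    and "min_degree V E = d"
    and "\<forall>u\<in>V. \<forall>v\<in>V. u \<noteq> v \<and> {u, v} \<notin> E \<longrightarrow>
           degree V E u + degree V E v \<ge> card V + d - 2"
  shows "rigid V E d"
  unfolding rigid_def
proof (intro allI impI notI)
  fix p assume gen: "generic V d p" and "flexible V E d p"
  then obtain x :: "real \<Rightarrow> 'a \<Rightarrow> nat \<Rightarrow> real" where
    cont: "\<forall>v\<in>V. \<forall>k<d. continuous_on {0..1} (\<lambda>t. x t v k)" and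
    x0: "\<forall>v\<in>V. \<forall>k<d. x 0 v k = p v k" and
    edge: "\<forall>t\<in>{0..1}. \<forall>u v. {u, v} \<in> E \<longrightarrow> sqdist d (x t) u v = sqdist d p u v" and
    ch: "\<exists>t\<in>{0..1}. \<exists>u\<in>V. \<exists>v\<in>V. sqdist d (x t) u v \<noteq> sqdist d p u v"
    unfolding flexible_def by blast
  have finV: "finite V" using assms(1) unfolding simple_graph_def by blast
  have Eform: "\<And>e. e \<in> E \<Longrightarrow> \<exists>u v. u \<in> V \<and> v \<in> V \<and> u \<noteq> v \<and> e = {u, v}"
    using assms(1) unfolding simple_graph_def by blast
  have noloop: "\<And>w. {w, w} \<notin> E"
  proof
    fix w assume "{w, w} \<in> E"
    then obtain u v where "u \<noteq> v" "{w, w} = {u, v}" using Eform by blast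
    then show False by (metis doubleton_eq_iff)
  qed
  have ecomm: "\<And>a b. {a, b} = {b, a}" by blast
  have all: "\<forall>t\<in>{0..1}. \<forall>a\<in>V. \<forall>b\<in>V. sqdist d (x t) a b = sqdist d p a b"
  proof (cases d)
    case 0
    then show ?thesis unfolding sqdist_def by simp
  next
    case (Suc n)
    have Vne: "V \<noteq> {}" using assms(2) by auto
    define N where "N = (\<lambda>v. {w \<in> V. {w, v} \<in> E})"
    have degN: "\<And>v. degree V E v = card (N v)" unfolding N_def degree_def by simp
    have "Min (degree V E ` V) \<in> degree V E ` V" using finV Vne by (intro Min_in) auto
    then obtain u0 where u0: "u0 \<in> V" "degree V E u0 = d" using assms(3) unfolding min_degree_def by auto
    have N0sub: "N u0 \<subseteq> V - {u0}" unfolding N_def using noloop by auto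
    have cardN0: "card (N u0) = d" using u0 degN by simp
    define B where "B = V - insert u0 (N u0)"
    have cardB: "card B = card V - Suc d"
    proof -
      have "insert u0 (N u0) \<subseteq> V" using N0sub u0 by auto
      moreover have "card (insert u0 (N u0)) = Suc d"
        using cardN0 N0sub finV by (subst card_insert_disjoint) (auto intro: finite_subset)
      moreover have "finite (insert u0 (N u0))" using calculation(1) finV by (rule finite_subset)
      ultimately show ?thesis unfolding B_def using card_Diff_subset[of "insert u0 (N u0)" V] by simp
    qed
    have Badj: "\<And>v w. v \<in> B \<Longrightarrow> w \<in> V \<Longrightarrow> w \<noteq> v \<Longrightarrow> w \<noteq> u0 \<Longrightarrow> {w, v} \<in> E"
    proof -
      fix v w assume v: "v \<in> B" and w: "w \<in> V" "w \<noteq> v" "w \<noteq> u0"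
      have vV: "v \<in> V" "v \<noteq> u0" "{v, u0} \<notin> E" using v unfolding B_def N_def by auto
      then have nuv: "{u0, v} \<notin> E" using ecomm[of u0 v] by simp
      have "u0 \<noteq> v \<and> {u0, v} \<notin> E" using vV(2) nuv by auto
      then have "degree V E u0 + degree V E v \<ge> card V + d - 2"
        using assms(4) u0(1) vV(1) by blast
      then have "d + card (N v) \<ge> card V + d - 2" using u0(2) degN[of v] by simp
      then have dv: "card (N v) \<ge> card V - 2" by arith
      have sub: "N v \<subseteq> V - {v, u0}"
      proof
        fix y assume "y \<in> N v"
        then have "y \<in> V" "{y, v} \<in> E" unfolding N_def by auto
        moreover have "y \<noteq> v" using noloop[of v] \<open>{y, v} \<in> E\<close> by auto
        moreover have "y \<noteq> u0" using nuv \<open>{y, v} \<in> E\<close> by auto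
        ultimately show "y \<in> V - {v, u0}" by simp
      qed
      have "{v, u0} \<subseteq> V" using vV u0 by auto
      moreover have "card {v, u0} = 2" using vV(2) by simp
      ultimately have cVd: "card (V - {v, u0}) = card V - 2" using card_Diff_subset[of "{v, u0}" V] by simp
      have finD: "finite (V - {v, u0})" using finV by blast
      have "card (N v) \<le> card (V - {v, u0})" by (rule card_mono[OF finD sub])
      then have "card (N v) = card (V - {v, u0})" using dv cVd by linarith
      then have "N v = V - {v, u0}" by (rule card_subset_eq[OF finD sub])
      then have "w \<in> N v" using w by simp
      then show "{w, v} \<in> E" unfolding N_def by simp
    qed
    have "d \<le> card B" using cardB assms(2) by simp
    then obtain K where K: "K \<subseteq> B" "card K = d" and finK: "finite K" by (rule obtain_subset_with_card_n)
    obtain ks where ks0: "distinct ks" "set ks = K" using finite_distinct_list[OF finK] by blast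
    have ks: "distinct ks" "length ks = d" "set ks \<subseteq> V"
    proof -
      show "distinct ks" by (rule ks0(1))
      show "length ks = d" using distinct_card[OF ks0(1)] ks0(2) K(2) by simp
      show "set ks \<subseteq> V" using ks0(2) K(1) unfolding B_def by blast
    qed
    have adjK: "\<And>i j. i \<in> V - {u0} \<Longrightarrow> j \<in> V - {u0} \<Longrightarrow> i \<in> K \<or> j \<in> K \<Longrightarrow> i \<noteq> j \<Longrightarrow> {i, j} \<in> E"
    proof -
      fix i j assume "i \<in> V - {u0}" "j \<in> V - {u0}" "i \<in> K \<or> j \<in> K" "i \<noteq> j"
      then consider "i \<in> K" | "j \<in> K" by blast
      then show "{i, j} \<in> E"
      proof cases
        case 1
        then have "i \<in> B" using K(1) by blast
        then have "{j, i} \<in> E" using Badj[of i j] \<open>j \<in> V - {u0}\<close> \<open>i \<noteq> j\<close> by blast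
        then show ?thesis using ecomm[of j i] by simp
      next
        case 2
        then have "j \<in> B" using K(1) by blast
        then show "{i, j} \<in> E" using Badj[of j i] \<open>i \<in> V - {u0}\<close> \<open>i \<noteq> j\<close> by blast
      qed
    qed
    have KV: "K \<subseteq> V - {u0}" using K(1) unfolding B_def by auto
    have step1: "\<And>t a b. t \<in> {0..1} \<Longrightarrow> a \<in> V - {u0} \<Longrightarrow> b \<in> V - {u0} \<Longrightarrow> sqdist d (x t) a b = sqdist d p a b"
    proof -
      fix t :: real and a b assume t: "t \<in> {0..1}" and a: "a \<in> V - {u0}" and b: "b \<in> V - {u0}"
      have pres: "sqdist d (x t) i j = sqdist d p i j"
        if "t \<in> {0..1}" "c \<in> V - {u0}" "i \<in> insert c (set ks)" "j \<in> insert c (set ks)" for t c i j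
      proof (cases "i = j")
        case True then show ?thesis by (simp add: sqdist_self)
      next
        case False
        have "i \<in> V - {u0}" "j \<in> V - {u0}" "i \<in> K \<or> j \<in> K"
          using that(2,3,4) KV ks0(2) False by auto
        then have "{i, j} \<in> E" using adjK False by blast
        then show ?thesis using edge that(1) by blast
      qed
      show "sqdist d (x t) a b = sqdist d p a b"
      proof -
        have pa: "sqdist d (x t') i j = sqdist d p i j"
          if "t' \<in> {0..1}" "i \<in> insert a (set ks)" "j \<in> insert a (set ks)" for t' i j
          using pres[OF that(1) a that(2,3)] .
        have pb: "sqdist d (x t') i j = sqdist d p i j"
          if "t' \<in> {0..1}" "i \<in> insert b (set ks)" "j \<in> insert b (set ks)" for t' i j
          using pres[OF that(1) b that(2,3)] .
        have aV: "a \<in> V" and bV: "b \<in> V" using a b by auto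
        show ?thesis by (rule GL[OF gen finV Suc ks aV bV cont x0 pa pb t])
      qed
    qed
    have finN0: "finite (N u0)" using finite_subset[OF N0sub] finV by blast
    obtain ns where ns0: "distinct ns" "set ns = N u0"
      using finite_distinct_list[OF finN0] by blast
    have ns: "distinct ns" "length ns = d" "set ns \<subseteq> V"
      using ns0 N0sub cardN0 distinct_card[OF ns0(1)] by auto
    have step2: "\<And>t b. t \<in> {0..1} \<Longrightarrow> b \<in> V \<Longrightarrow> sqdist d (x t) u0 b = sqdist d p u0 b"
    proof -
      fix t :: real and b assume t: "t \<in> {0..1}" and b: "b \<in> V"
      have presa: "sqdist d (x t) i j = sqdist d p i j"
        if "t \<in> {0..1}" "i \<in> insert u0 (set ns)" "j \<in> insert u0 (set ns)" for t i j
      proof -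
        have u0N: "u0 \<notin> N u0" using N0sub by blast
        have ij: "i = u0 \<or> i \<in> N u0" "j = u0 \<or> j \<in> N u0" using that(2,3) ns0(2) by simp_all
        consider "i = j" | "i = u0" "j \<in> N u0" "j \<noteq> u0" | "j = u0" "i \<in> N u0" "i \<noteq> u0"
          | "i \<in> N u0" "j \<in> N u0" using ij u0N by fast
        then show ?thesis
        proof cases
          case 1 then show ?thesis by (simp add: sqdist_self)
        next
          case 2
          then have "{j, i} \<in> E" unfolding N_def by simp
          then have "{i, j} \<in> E" using ecomm[of i j] by simp
          then show ?thesis using edge that(1) by blast
        next
          case 3
          then have "{i, j} \<in> E" unfolding N_def by simp
          then show ?thesis using edge that(1) by blast
        next
          case 4
          then show ?thesis using step1 that(1) N0sub by blast
        qed
      qed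
      have presb: "sqdist d (x t) i j = sqdist d p i j"
        if "t \<in> {0..1}" "i \<in> insert b (set ns)" "j \<in> insert b (set ns)" for t i j
      proof (cases "b = u0")
        case True then show ?thesis using presa that by blast
      next
        case False
        then have "i \<in> V - {u0}" "j \<in> V - {u0}" using that b ns0 N0sub by auto
        then show ?thesis using step1 that(1) by blast
      qed
      show "sqdist d (x t) u0 b = sqdist d p u0 b"
        by (rule GL[OF gen finV Suc ns u0(1) b cont x0 presa presb t])
    qed
    show ?thesis
    proof (intro ballI)
      fix t :: real and a b assume t: "t \<in> {0..1}" and a: "a \<in> V" and b: "b \<in> V"
      show "sqdist d (x t) a b = sqdist d p a b"
      proof (cases "a = u0")
        case True then show ?thesis using step2 t b by blast
      next
        case False
        show ?thesis
        proof (cases "b = u0")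
          case True
          have "sqdist d (x t) b a = sqdist d p b a" using step2[OF t a] True by simp
          then show ?thesis using sqdist_comm[of d "x t" a b] sqdist_comm[of d p a b] by simp
        next
          case False
          then show ?thesis using step1 t a b \<open>a \<noteq> u0\<close> by blast
        qed
      qed
    qed
  qed
  with ch show False by blast
qed

end
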